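(* Consider scheduling games on two identical machines of speed $1$ with arbitrary priority lists in which all jobs have negative deterioration (with no restriction relating $a_i$ to the machine speeds). (a) Every such game with exactly two jobs has a pure Nash equilibrium. (b) There exists such a game with three jobs that has no pure Nash equilibrium; for instance, the game with jobs $u,v,w$ with $p_u(t)=\max\{5-1.05t,0.2\}$, $p_v(t)=\max\{4-1.1t,0.2\}$, $p_w(t)=\max\{3-1.2t,0.2\}$ and priority lists $\pi_1=(v,u,w)$, $\pi_2=(w,u,v)$.
   Context: Scheduling game: a finite set $N$ of $n\ge1$ jobs (players) and a set $M$ of machines. Machine $j$ has speed $s_j>0$ and a priority list $\pi_j$, a bijection $N\to\{1,\dots,n\}$; job $u$ has higher priority than $v$ on $j$ iff $\pi_j(u)<\pi_j(v)$ (a list written $(x,y,z)$ gives $x$ the highest priority). A job with negative deterioration has processing-time function $p_i(t)=\max\{\tau_i,b_i-a_it\}$ ($b_i,a_i\ge0$, $\tau_i>0$). A profile $\sigma\in M^N$ assigns each job to a machine. On machine $j$, the jobs assigned to it, listed in increasing $\pi_j$-order as $i_1,i_2,\dots$, are processed without idle time: $S_{i_1}(\sigma)=0$, $C_{i_k}(\sigma)=S_{i_k}(\sigma)+p_{i_k}(S_{i_k}(\sigma))/s_j$, $S_{i_{k+1}}(\sigma)=C_{i_k}(\sigma)$. The cost of job $i$ is $C_i(\sigma)$. A pure Nash equilibrium (NE) is a profile in which no job can strictly decrease its completion time by unilaterally changing its machine. *)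

theory Defs
  imports Complex_Main
begin

definition neg_det :: "real \<Rightarrow> real \<Rightarrow> real \<Rightarrow> real \<Rightarrow> real" where
  "neg_det tau a b = (\<lambda>t. max tau (b - a * t))"

fun run :: "('j \<Rightarrow> real \<Rightarrow> real) \<Rightarrow> real \<Rightarrow> real \<Rightarrow> 'j list \<Rightarrow> real" where
  "run p sp t [] = t"
| "run p sp t (x # xs) = run p sp (t + p x t / sp) xs"

text \<open>Game data: job set N, speeds s, priority lists prio (prio m i = position of job i on
  machine m, smaller = higher priority), processing-time functions p.
  Profile sigma assigns jobs to machines.\<close>
definition start_time ::
  "'j set \<Rightarrow> ('m \<Rightarrow> real) \<Rightarrow> ('m \<Rightarrow> 'j \<Rightarrow> nat) \<Rightarrow> ('j \<Rightarrow> real \<Rightarrow> real) \<Rightarrow> ('j \<Rightarrow> 'm) \<Rightarrow> 'j \<Rightarrow> real" where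
  "start_time N s prio p \<sigma> i =
     run p (s (\<sigma> i)) 0
       (sorted_key_list_of_set (prio (\<sigma> i)) {k \<in> N. \<sigma> k = \<sigma> i \<and> prio (\<sigma> i) k < prio (\<sigma> i) i})"

definition completion ::
  "'j set \<Rightarrow> ('m \<Rightarrow> real) \<Rightarrow> ('m \<Rightarrow> 'j \<Rightarrow> nat) \<Rightarrow> ('j \<Rightarrow> real \<Rightarrow> real) \<Rightarrow> ('j \<Rightarrow> 'm) \<Rightarrow> 'j \<Rightarrow> real" where
  "completion N s prio p \<sigma> i =
     start_time N s prio p \<sigma> i + p i (start_time N s prio p \<sigma> i) / s (\<sigma> i)"

definition is_NE ::
  "'j set \<Rightarrow> 'm set \<Rightarrow> ('m \<Rightarrow> real) \<Rightarrow> ('m \<Rightarrow> 'j \<Rightarrow> nat) \<Rightarrow> ('j \<Rightarrow> real \<Rightarrow> real) \<Rightarrow> ('j \<Rightarrow> 'm) \<Rightarrow> bool" where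
  "is_NE N M s prio p \<sigma> \<longleftrightarrow>
     \<sigma> ` N \<subseteq> M \<and>
     (\<forall>i\<in>N. \<forall>m\<in>M. \<not> (completion N s prio p (\<sigma>(i := m)) i < completion N s prio p \<sigma> i))"

text \<open>Concrete 3-job example: jobs u = 0, v = 1, w = 2; machines 1 and 2.\<close>
definition ex_p :: "nat \<Rightarrow> real \<Rightarrow> real" where
  "ex_p i = (if i = 0 then neg_det (1/5) (21/20) 5
             else if i = 1 then neg_det (1/5) (11/10) 4
             else neg_det (1/5) (6/5) 3)"

definition ex_pi :: "nat \<Rightarrow> nat \<Rightarrow> nat" where
  "ex_pi m i = (if m = 1 then (if i = 1 then 1 else if i = 0 then 2 else 3)
                else (if i = 2 then 1 else if i = 0 then 2 else 3))"

end

theory Submission imports Defs begin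
context linorder begin
lemma skl_empty: "sorted_key_list_of_set f {} = []"
proof -
  interpret folding_insort_key "(\<le>)" "(<)" "{}" f by unfold_locales simp
  show ?thesis by (rule sorted_key_list_of_set_empty)
qed
lemma skl_single: "sorted_key_list_of_set f {a} = [a]"
proof -
  interpret folding_insort_key "(\<le>)" "(<)" "{a}" f by unfold_locales simp
  show ?thesis by (rule sorted_key_list_of_set_unique[THEN iffD1]) auto
qed

lemma skl_two: "f a < f b \<Longrightarrow> sorted_key_list_of_set f {a,b} = [a,b]"
proof -
  assume h: "f a < f b"
  then have "a \<noteq> b" by auto
  interpret folding_insort_key "(\<le>)" "(<)" "{a,b}" f by unfold_locales (use h in auto)
  show ?thesis by (rule sorted_key_list_of_set_unique[THEN iffD1]) (use h \<open>a\<noteq>b\<close> in auto)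
qed
end

lemma skl_two': "f b < f a \<Longrightarrow> sorted_key_list_of_set f {a,b} = [b,a]"
  using skl_two[of f b a] by (simp add: insert_commute)

lemma coll3: "{k \<in> {0,1,2::nat}. P k} = (if P 0 then {0} else {}) \<union> (if P 1 then {1} else {}) \<union> (if P 2 then {2} else {})"
  proof (rule set_eqI)
  fix x :: nat
  show "x \<in> {k \<in> {0,1,2::nat}. P k} \<longleftrightarrow> x \<in> (if P 0 then {0} else {}) \<union> (if P 1 then {1} else {}) \<union> (if P 2 then {2} else {})"
    by (cases "x = 0"; cases "x = 1"; cases "x = 2"; simp)
qed

lemma compl2:
  assumes "N = {i,j}" "i \<noteq> j"
  shows "completion N (\<lambda>_. 1) prio p \<sigma> i =
    (if \<sigma> j = \<sigma> i \<and> prio (\<sigma> i) j < prio (\<sigma> i) i then p j 0 + p i (p j 0) else p i 0)"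
proof -
  have "{k \<in> N. \<sigma> k = \<sigma> i \<and> prio (\<sigma> i) k < prio (\<sigma> i) i} =
        (if \<sigma> j = \<sigma> i \<and> prio (\<sigma> i) j < prio (\<sigma> i) i then {j} else {})"
    using assms by auto
  then show ?thesis unfolding completion_def start_time_def
    by (simp add: skl_empty skl_single)
qed

lemma stepA:
  assumes N: "N = {i,j}" and ij: "i \<noteq> j" and d: "\<sigma>0 i \<noteq> \<sigma>0 j"
    and M: "M = {\<sigma>0 i, \<sigma>0 j}" and m: "m \<in> M"
    and lt: "completion N (\<lambda>_. 1) prio p (\<sigma>0(i:=m)) i < completion N (\<lambda>_. 1) prio p \<sigma>0 i"
  shows "\<exists>\<sigma>. is_NE N M (\<lambda>_. 1) prio p \<sigma>"
proof -
  have c0: "completion N (\<lambda>_. 1) prio p \<sigma>0 i = p i 0" using compl2[OF N ij, of prio p \<sigma>0] d by simp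
  have "m \<noteq> \<sigma>0 i" using lt by auto
  then have mj: "m = \<sigma>0 j" using M m by auto
  have c1: "completion N (\<lambda>_. 1) prio p (\<sigma>0(i:=m)) i =
     (if m = m \<and> prio m j < prio m i then p j 0 + p i (p j 0) else p i 0)"
    using compl2[OF N ij, of prio p "\<sigma>0(i:=m)"] ij mj by simp
  have pr: "prio m j < prio m i" and g: "p j 0 + p i (p j 0) < p i 0"
    using lt c0 c1 by (auto split: if_splits)
  have N': "N = {j,i}" using N by auto
  have ji: "j \<noteq> i" using ij by auto
  define \<sigma>1 where "\<sigma>1 = (\<lambda>_::'a. m)"
  have "is_NE N M (\<lambda>_. 1) prio p \<sigma>1"
    unfolding is_NE_def
  proof (intro conjI ballI)
    show "\<sigma>1 ` N \<subseteq> M" using m \<sigma>1_def by auto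
  next
    fix k m' assume k: "k \<in> N" and m': "m' \<in> M"
    show "\<not> completion N (\<lambda>_. 1) prio p (\<sigma>1(k := m')) k < completion N (\<lambda>_. 1) prio p \<sigma>1 k"
    proof (cases "m' = m")
      case True
      then have "\<sigma>1(k := m') = \<sigma>1" unfolding \<sigma>1_def by auto
      then show ?thesis by simp
    next
      case False
      show ?thesis
      proof (cases "k = i")
        case True
        have a1: "completion N (\<lambda>_. 1) prio p (\<sigma>1(k := m')) k = p i 0"
          using compl2[OF N ij, of prio p "\<sigma>1(k := m')"] True False ij unfolding \<sigma>1_def by simp
        have a2: "completion N (\<lambda>_. 1) prio p \<sigma>1 k = p j 0 + p i (p j 0)"
          using compl2[OF N ij, of prio p "\<sigma>1"] True pr unfolding \<sigma>1_def by simp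
        show ?thesis using a1 a2 g by simp
      next
        case ki: False
        then have kj: "k = j" using k N by auto
        have a1: "completion N (\<lambda>_. 1) prio p (\<sigma>1(k := m')) k = p j 0"
          using compl2[OF N' ji, of prio p "\<sigma>1(k := m')"] kj False ij unfolding \<sigma>1_def by simp
        have a2: "completion N (\<lambda>_. 1) prio p \<sigma>1 k = p j 0"
          using compl2[OF N' ji, of prio p "\<sigma>1"] kj pr unfolding \<sigma>1_def by simp
        show ?thesis using a1 a2 by simp
      qed
    qed
  qed
  then show ?thesis by blast
qed

lemma parta:
  assumes "card N = 2" "card M = 2"
  shows "\<exists>\<sigma>. is_NE N M (\<lambda>_. 1) prio p \<sigma>"
proof -
  obtain x y where N: "N = {x,y}" and xy: "x \<noteq> y" using assms(1) card_2_iff by metis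
  obtain A B where M: "M = {A,B}" and AB: "A \<noteq> B" using assms(2) card_2_iff by metis
  define \<sigma>0 where "\<sigma>0 = (\<lambda>k. if k = x then A else B)"
  have sx: "\<sigma>0 x = A" and sy: "\<sigma>0 y = B" using xy unfolding \<sigma>0_def by auto
  show ?thesis
  proof (cases "is_NE N M (\<lambda>_. 1) prio p \<sigma>0")
    case True then show ?thesis by blast
  next
    case False
    have "\<sigma>0 ` N \<subseteq> M" using N M sx sy by auto
    then obtain i m where i: "i \<in> N" and m: "m \<in> M" and
      lt: "completion N (\<lambda>_. 1) prio p (\<sigma>0(i:=m)) i < completion N (\<lambda>_. 1) prio p \<sigma>0 i"
      using False unfolding is_NE_def by blast
    show ?thesis
    proof (cases "i = x")
      case True
      show ?thesis by (rule stepA[OF N xy _ _ m lt[unfolded True]]) (use sx sy AB M in auto)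
    next
      case False
      then have iy: "i = y" using i N by auto
      have N': "N = {y,x}" using N by auto
      show ?thesis by (rule stepA[OF N' _ _ _ m lt[unfolded iy]]) (use sx sy AB M xy in auto)
    qed
  qed
qed

lemma exp0: "ex_p 0 t = max (1/5) (5 - 21/20*t)" by (simp add: ex_p_def neg_det_def)
lemma exp1: "ex_p (Suc 0) t = max (1/5) (4 - 11/10*t)" by (simp add: ex_p_def neg_det_def)
lemma exp2: "ex_p 2 t = max (1/5) (3 - 6/5*t)" by (simp add: ex_p_def neg_det_def)

lemma partb: "\<not> is_NE {0, 1, 2 :: nat} {1, 2 :: nat} (\<lambda>_. 1) ex_pi ex_p \<sigma>"
proof
  assume ne: "is_NE {0, 1, 2 :: nat} {1, 2 :: nat} (\<lambda>_. 1) ex_pi ex_p \<sigma>"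
  have r: "\<sigma> 0 \<in> {1,2}" "\<sigma> 1 \<in> {1,2}" "\<sigma> 2 \<in> {1,2}" using ne unfolding is_NE_def by auto
  have dev: "\<And>i m. i \<in> {0,1,2} \<Longrightarrow> m \<in> {1,2} \<Longrightarrow> \<not> completion {0, 1, 2 :: nat} (\<lambda>_. 1) ex_pi ex_p (\<sigma>(i:=m)) i < completion {0, 1, 2 :: nat} (\<lambda>_. 1) ex_pi ex_p \<sigma> i"
    using ne unfolding is_NE_def by blast
  have "\<not> (\<sigma> 0 = 1 \<and> \<sigma> 1 = 1 \<and> \<sigma> 2 = 1)"
  proof
    assume h: "\<sigma> 0 = 1 \<and> \<sigma> 1 = 1 \<and> \<sigma> 2 = 1"
    show False using dev[of 2 2, unfolded completion_def start_time_def coll3] h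
      by (simp add: skl_empty skl_single skl_two skl_two' ex_pi_def exp0 exp1 exp2)
  qed
  moreover
  have "\<not> (\<sigma> 0 = 1 \<and> \<sigma> 1 = 1 \<and> \<sigma> 2 = 2)"
  proof
    assume h: "\<sigma> 0 = 1 \<and> \<sigma> 1 = 1 \<and> \<sigma> 2 = 2"
    show False using dev[of 1 2, unfolded completion_def start_time_def coll3] h
      by (simp add: skl_empty skl_single skl_two skl_two' ex_pi_def exp0 exp1 exp2)
  qed
  moreover
  have "\<not> (\<sigma> 0 = 1 \<and> \<sigma> 1 = 2 \<and> \<sigma> 2 = 1)"
  proof
    assume h: "\<sigma> 0 = 1 \<and> \<sigma> 1 = 2 \<and> \<sigma> 2 = 1"
    show False using dev[of 2 2, unfolded completion_def start_time_def coll3] h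
      by (simp add: skl_empty skl_single skl_two skl_two' ex_pi_def exp0 exp1 exp2)
  qed
  moreover
  have "\<not> (\<sigma> 0 = 1 \<and> \<sigma> 1 = 2 \<and> \<sigma> 2 = 2)"
  proof
    assume h: "\<sigma> 0 = 1 \<and> \<sigma> 1 = 2 \<and> \<sigma> 2 = 2"
    show False using dev[of 0 2, unfolded completion_def start_time_def coll3] h
      by (simp add: skl_empty skl_single skl_two skl_two' ex_pi_def exp0 exp1 exp2)
  qed
  moreover
  have "\<not> (\<sigma> 0 = 2 \<and> \<sigma> 1 = 1 \<and> \<sigma> 2 = 1)"
  proof
    assume h: "\<sigma> 0 = 2 \<and> \<sigma> 1 = 1 \<and> \<sigma> 2 = 1"
    show False using dev[of 0 1, unfolded completion_def start_time_def coll3] h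
      by (simp add: skl_empty skl_single skl_two skl_two' ex_pi_def exp0 exp1 exp2)
  qed
  moreover
  have "\<not> (\<sigma> 0 = 2 \<and> \<sigma> 1 = 1 \<and> \<sigma> 2 = 2)"
  proof
    assume h: "\<sigma> 0 = 2 \<and> \<sigma> 1 = 1 \<and> \<sigma> 2 = 2"
    show False using dev[of 0 1, unfolded completion_def start_time_def coll3] h
      by (simp add: skl_empty skl_single skl_two skl_two' ex_pi_def exp0 exp1 exp2)
  qed
  moreover
  have "\<not> (\<sigma> 0 = 2 \<and> \<sigma> 1 = 2 \<and> \<sigma> 2 = 1)"
  proof
    assume h: "\<sigma> 0 = 2 \<and> \<sigma> 1 = 2 \<and> \<sigma> 2 = 1"
    show False using dev[of 1 1, unfolded completion_def start_time_def coll3] h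
      by (simp add: skl_empty skl_single skl_two skl_two' ex_pi_def exp0 exp1 exp2)
  qed
  moreover
  have "\<not> (\<sigma> 0 = 2 \<and> \<sigma> 1 = 2 \<and> \<sigma> 2 = 2)"
  proof
    assume h: "\<sigma> 0 = 2 \<and> \<sigma> 1 = 2 \<and> \<sigma> 2 = 2"
    show False using dev[of 1 1, unfolded completion_def start_time_def coll3] h
      by (simp add: skl_empty skl_single skl_two skl_two' ex_pi_def exp0 exp1 exp2)
  qed
  moreover
  ultimately show False using r by auto
qed

theorem theorem6:
  shows
   "(\<forall>(N :: 'j set) (M :: 'm set) (prio :: 'm \<Rightarrow> 'j \<Rightarrow> nat) tau a b.
       finite N \<and> card N = 2 \<and> card M = 2 \<and>
       (\<forall>m\<in>M. bij_betw (prio m) N {1..card N}) \<and>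
       (\<forall>i\<in>N. tau i > 0 \<and> a i \<ge> 0 \<and> b i \<ge> 0) \<longrightarrow>
       (\<exists>\<sigma>. is_NE N M (\<lambda>_. 1) prio (\<lambda>i. neg_det (tau i) (a i) (b i)) \<sigma>))
    \<and> (\<forall>\<sigma>. \<not> is_NE {0, 1, 2 :: nat} {1, 2 :: nat} (\<lambda>_. 1) ex_pi ex_p \<sigma>)"
  using parta partb by blast

end
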